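(* Let $G$ be a finite group with $G=P\rtimes F$, where $P$ is a cyclic normal $p$-subgroup for some prime $p$, $F$ is a subgroup with $|F|>1$ and $\gcd(p,|F|)=1$. Then: (1) each element of $F$ acts on $P$ (by conjugation) either trivially or fixed-point-freely (i.e. fixes only the identity of $P$); (2) if $x\in F$ has order $m$ and $u\in P$, then $m$ is the least positive integer such that $(ux)^m\in P$; (3) if $u\in P$ and $x\in C_F(P)$, then $o(ux)=o(u)o(x)$; (4) if $u\in P$ and $x\in F\setminus C_F(P)$, then $o(ux)=o(x)$; (5) with $Z=C_F(P)$, $$\psi(G)=\psi(P)\psi(Z)+|P|\,\psi(F\setminus Z)<\psi(P)\psi(Z)+|P|\,\psi(F),$$ where for a subset $S\subseteq G$ we write $\psi(S)=\sum_{s\in S}o(s)$.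
   Context: For a finite group $G$, $\psi(G)=\sum_{g\in G} o(g)$ denotes the sum of the orders of all elements of $G$; the same notation is used for subsets. $C_F(P)$ is the centralizer of $P$ in $F$. *)

theory Defs
  imports "HOL-Algebra.Algebra"
begin

definition psi :: "('a, 'b) monoid_scheme \<Rightarrow> 'a set \<Rightarrow> nat" where
  "psi G S = (\<Sum>s\<in>S. group.ord G s)"

definition centralizer_in :: "('a, 'b) monoid_scheme \<Rightarrow> 'a set \<Rightarrow> 'a set \<Rightarrow> 'a set" where
  "centralizer_in G F P = {x \<in> F. \<forall>u\<in>P. x \<otimes>\<^bsub>G\<^esub> u = u \<otimes>\<^bsub>G\<^esub> x}"

end

theory Submission imports Defs "HOL-Number_Theory.Cong" begin
lemma nt_aux:
  fixes p N m k :: nat and A :: int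
  assumes "Factorial_Ring.prime p" "N dvd p^k" "coprime p m" "int N dvd A^m - 1"
  shows "int N dvd A - 1 \<or> (coprime (int N) (A - 1) \<and> int N dvd (\<Sum>i<m. A^i))"
proof -
  let ?S = "\<Sum>i<m. A^i"
  have geo: "A^m - 1 = (A - 1) * ?S" by (rule power_diff_1_eq)
  have Nd: "int N dvd int p ^ k" using assms(2) by (metis of_nat_dvd_iff of_nat_power)
  have cop: "coprime (int N) yy" if "coprime (int p) yy" for yy
  proof -
    have "coprime (int p ^ k) yy" using that by simp
    thus ?thesis using Nd coprime_divisors by (metis dvd_refl)
  qed
  show ?thesis
  proof (cases "int p dvd A - 1")
    case True
    then have c: "[A = 1] (mod int p)" by (simp add: cong_iff_dvd_diff)
    have "[?S = (\<Sum>i<m. 1^i)] (mod int p)"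
      by (intro cong_sum cong_pow c)
    then have c2: "[?S = int m] (mod int p)" by simp
    have "coprime (int m) (int p)" using assms(3) by (simp add: ac_simps)
    then have "coprime ?S (int p)" using cong_imp_coprime[OF cong_sym[OF c2]] by blast
    then have "coprime (int N) ?S" using cop by (metis coprime_commute)
    then have "int N dvd A - 1" using assms(4) geo
      by (metis coprime_dvd_mult_left_iff)
    then show ?thesis by simp
  next
    case False
    have "Factorial_Ring.prime (int p)" using assms(1) by simp
    then have "coprime (int p) (A - 1)" using False prime_imp_coprime by blast
    then have c: "coprime (int N) (A - 1)" using cop by blast
    then have "int N dvd ?S" using assms(4) geo by (metis coprime_dvd_mult_right_iff)
    then show ?thesis using c by simp
  qed
qed
lemma (in group) cancel_aux [simp]:
  "x \<in> carrier G \<Longrightarrow> z \<in> carrier G \<Longrightarrow> inv x \<otimes> (x \<otimes> z) = z"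
  "x \<in> carrier G \<Longrightarrow> z \<in> carrier G \<Longrightarrow> x \<otimes> (inv x \<otimes> z) = z"
  by (simp_all add: m_assoc[symmetric])

lemma (in group) conj_pow:
  assumes "x \<in> carrier G" "y \<in> carrier G"
  shows "x \<otimes> (y [^] (i::nat)) \<otimes> inv x = (x \<otimes> y \<otimes> inv x) [^] i"
proof (induct i)
  case 0
  then show ?case using assms by simp
next
  case (Suc i)
  have "x \<otimes> (y [^] Suc i) \<otimes> inv x = (x \<otimes> y [^] i \<otimes> inv x) \<otimes> (x \<otimes> y \<otimes> inv x)"
    using assms by (simp add: m_assoc)
  also have "\<dots> = (x \<otimes> y \<otimes> inv x) [^] Suc i" using Suc by simp
  finally show ?case .
qed

lemma (in group) subgroup_pow_card:
  assumes "subgroup H G" "y \<in> H"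
  shows "y [^] card H = \<one>"
proof -
  interpret K: group "G\<lparr>carrier := H\<rparr>" using assms(1) by (rule subgroup.subgroup_is_group) (rule is_group)
  have "y [^]\<^bsub>G\<lparr>carrier := H\<rparr>\<^esub> order (G\<lparr>carrier := H\<rparr>) = \<one>\<^bsub>G\<lparr>carrier := H\<rparr>\<^esub>"
    using assms(2) by (intro K.pow_order_eq_1) simp
  then show ?thesis by (simp add: order_def nat_pow_consistent[symmetric])
qed

locale sdp = group G for G (structure) +
  fixes P F :: "'a set" and p k :: nat
  assumes finG: "finite (carrier G)"
    and pprime: "Factorial_Ring.prime p"
    and Pnormal: "P \<lhd> G" and Pcyc: "cyclic_group (G\<lparr>carrier := P\<rparr>)" and cardP: "card P = p ^ k"
    and Fsub: "subgroup F G" and copF: "coprime p (card F)"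
    and PF: "P \<inter> F = {\<one>}" and PFG: "P <#> F = carrier G"
begin
lemma Psub: "subgroup P G" using Pnormal by (rule normal_imp_subgroup)

lemma Pcarr: "u \<in> P \<Longrightarrow> u \<in> carrier G" using Psub by (rule subgroup.mem_carrier)
lemma Fcarr: "x \<in> F \<Longrightarrow> x \<in> carrier G" using Fsub by (rule subgroup.mem_carrier)

lemma finP: "finite P" using finG subgroup.subset[OF Psub] by (rule finite_subset[rotated])
lemma finF: "finite F" using finG subgroup.subset[OF Fsub] by (rule finite_subset[rotated])


lemma gen: obtains g where "g \<in> P" "\<And>u. u \<in> P \<Longrightarrow> \<exists>i::nat. u = g [^] i"
proof -
  interpret H: group "G\<lparr>carrier := P\<rparr>" using Psub by (rule subgroup.subgroup_is_group) (rule is_group)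
  obtain g where g: "g \<in> P" "P = range (\<lambda>n::int. g [^]\<^bsub>G\<lparr>carrier := P\<rparr>\<^esub> n)"
    using Pcyc unfolding H.cyclic_group by auto
  have gc: "g \<in> carrier G" using g(1) Pcarr by blast
  have N: "ord g \<ge> 1" using ord_ge_1[OF finG gc] .
  have "\<exists>i::nat. u = g [^] i" if "u \<in> P" for u
  proof -
    obtain z::int where z: "u = g [^]\<^bsub>G\<lparr>carrier := P\<rparr>\<^esub> z" using g(2) \<open>u \<in> P\<close> by auto
    then have z': "u = g [^] z" using int_pow_consistent[OF Psub g(1), of z] z by metis
    define i where "i = nat (z mod int (ord g))"
    have ii: "int i = z mod int (ord g)" using N by (simp add: i_def)
    have "z mod int (ord g) - z = - (z div int (ord g) * int (ord g))"
      using minus_div_mult_eq_mod[of z "int (ord g)"] by linarith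
    then have "int (ord g) dvd (int i - z)" unfolding ii by simp
    then have "g [^] z = g [^] (int i)" using int_pow_eq[OF gc] by blast
    then show ?thesis using z' int_pow_int by metis
  qed
  then show ?thesis using that g(1) by blast
qed


lemma ord_dvd_cardF: "x \<in> F \<Longrightarrow> ord x dvd card F"
  using pow_eq_id[OF Fcarr] subgroup_pow_card[OF Fsub] by blast

lemma cop_ordF: "x \<in> F \<Longrightarrow> coprime p (ord x)"
  using coprime_divisors[OF dvd_refl ord_dvd_cardF copF] by blast

lemma Pclosed: "u \<in> P \<Longrightarrow> u [^] (n::nat) \<in> P"
  by (induct n) (simp_all add: subgroup.one_closed[OF Psub] subgroup.m_closed[OF Psub])

lemma iter_lemma:
  assumes xc: "x \<in> carrier G" and conj: "\<And>u. u \<in> P \<Longrightarrow> x \<otimes> u \<otimes> inv x = u [^] (a::nat)"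
    and u: "u \<in> P"
  shows "x [^] (j::nat) \<otimes> u \<otimes> inv (x [^] j) = u [^] (a ^ j)"
proof (induct j)
  case 0
  then show ?case using Pcarr[OF u] by simp
next
  case (Suc j)
  have uc: "u \<in> carrier G" using Pcarr[OF u] .
  have "x [^] Suc j \<otimes> u \<otimes> inv (x [^] Suc j) = x [^] j \<otimes> (x \<otimes> u \<otimes> inv x) \<otimes> inv (x [^] j)"
    using xc uc by (simp add: inv_mult_group m_assoc)
  also have "\<dots> = x [^] j \<otimes> (u [^] a) \<otimes> inv (x [^] j)" using conj[OF u] by simp
  also have "\<dots> = (x [^] j \<otimes> u \<otimes> inv (x [^] j)) [^] a" using conj_pow[of "x [^] j" u a] xc uc by simp
  also have "\<dots> = u [^] (a ^ Suc j)" using Suc uc by (simp add: nat_pow_pow mult.commute)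
  finally show ?case .
qed

lemma pow_sum_lemma:
  assumes xc: "x \<in> carrier G" and conj: "\<And>u. u \<in> P \<Longrightarrow> x \<otimes> u \<otimes> inv x = u [^] (a::nat)"
    and u: "u \<in> P"
  shows "(u \<otimes> x) [^] (j::nat) = u [^] (\<Sum>i<j. a ^ i) \<otimes> x [^] j"
proof (induct j)
  case 0
  then show ?case by simp
next
  case (Suc j)
  have uc: "u \<in> carrier G" using Pcarr[OF u] .
  have "(u \<otimes> x) [^] Suc j = u [^] (\<Sum>i<j. a ^ i) \<otimes> x [^] j \<otimes> (u \<otimes> x)"
    using Suc by simp
  also have "\<dots> = u [^] (\<Sum>i<j. a ^ i) \<otimes> (x [^] j \<otimes> u \<otimes> inv (x [^] j)) \<otimes> (x [^] j \<otimes> x)"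
    using xc uc by (simp add: m_assoc)
  also have "\<dots> = u [^] (\<Sum>i<j. a ^ i) \<otimes> u [^] (a ^ j) \<otimes> x [^] Suc j"
    using iter_lemma[OF xc conj u, of j] by simp
  also have "\<dots> = u [^] (\<Sum>i<Suc j. a ^ i) \<otimes> x [^] Suc j"
    using uc by (simp add: nat_pow_mult)
  finally show ?case .
qed

lemma expo:
  assumes x: "x \<in> F"
  shows "\<exists>a N. N dvd p^k \<and> (\<forall>u\<in>P. ord u dvd N) \<and> (\<forall>u\<in>P. x \<otimes> u \<otimes> inv x = u [^] a)
           \<and> int N dvd int a ^ ord x - 1"
proof -
  obtain g where g: "g \<in> P" "\<And>u. u \<in> P \<Longrightarrow> \<exists>i::nat. u = g [^] i" using gen by blast
  have gc: "g \<in> carrier G" using g(1) Pcarr by blast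
  have xc: "x \<in> carrier G" using x Fcarr by blast
  define N where "N = ord g"
  have "g [^] card P = \<one>" using subgroup_pow_card[OF Psub g(1)] .
  then have Nd: "N dvd p^k" using pow_eq_id[OF gc] cardP N_def by simp
  have ordu: "ord u dvd N" if u: "u \<in> P" for u
  proof -
    obtain i :: nat where i: "u = g [^] i" using g(2) u by blast
    have "u [^] N = (g [^] N) [^] i" using gc by (simp add: i nat_pow_pow mult.commute)
    also have "\<dots> = \<one>" using gc N_def by simp
    finally show ?thesis using pow_eq_id[OF Pcarr[OF u]] by blast
  qed
  have "x \<otimes> g \<otimes> inv x \<in> P" using normal.inv_op_closed2[OF Pnormal xc g(1)] .
  then obtain b :: nat where b: "x \<otimes> g \<otimes> inv x = g [^] b" using g(2) by blast
  define a where "a = b + N"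
  have ga: "x \<otimes> g \<otimes> inv x = g [^] a"
    using gc by (simp add: b a_def nat_pow_mult[symmetric] N_def)
  have conj: "x \<otimes> u \<otimes> inv x = u [^] a" if u: "u \<in> P" for u
  proof -
    obtain i :: nat where i: "u = g [^] i" using g(2) u by blast
    have "x \<otimes> u \<otimes> inv x = (x \<otimes> g \<otimes> inv x) [^] i" using conj_pow[OF xc gc] i by simp
    also have "\<dots> = g [^] (a * i)" using gc by (simp add: ga nat_pow_pow)
    also have "\<dots> = u [^] a" using gc by (simp add: i nat_pow_pow mult.commute)
    finally show ?thesis .
  qed
  have iter: "x [^] j \<otimes> u \<otimes> inv (x [^] j) = u [^] (a ^ j)" if "u \<in> P" for u j
    using iter_lemma[OF xc] conj that by blast
  have "g [^] (a ^ ord x) = g" using iter[OF g(1), of "ord x"] xc gc by simp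
  then have e1: "g [^] (int (a ^ ord x)) = g" by (simp only: int_pow_int)
  have e2: "g [^] (1::int) = g" using gc by (rule int_pow_1)
  have "g [^] (int (a ^ ord x)) = g [^] (1::int)" using e1 e2 by (rule trans[OF _ sym])
  then have "int N dvd (1 - int (a ^ ord x))" using int_pow_eq[OF gc] unfolding N_def by blast
  then have "int N dvd - (1 - int (a ^ ord x))" by (simp only: dvd_minus_iff)
  then have cg: "int N dvd int a ^ ord x - 1" by simp
  show ?thesis
    apply (rule exI[of _ a], rule exI[of _ N])
    using Nd ordu conj cg by blast
qed


lemma prodP:
  assumes x: "x \<in> F" and u: "u \<in> P"
  shows "\<exists>w\<in>P. (u \<otimes> x) [^] (j::nat) = w \<otimes> x [^] j"
proof (induct j)
  case 0
  then show ?case using subgroup.one_closed[OF Psub] by (intro bexI[of _ \<one>]) simp_all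
next
  case (Suc j)
  then obtain w where w: "w \<in> P" "(u \<otimes> x) [^] j = w \<otimes> x [^] j" by blast
  have xc: "x \<in> carrier G" using x Fcarr by blast
  have uc: "u \<in> carrier G" using Pcarr[OF u] .
  have wc: "w \<in> carrier G" using Pcarr[OF w(1)] .
  have v: "x [^] j \<otimes> u \<otimes> inv (x [^] j) \<in> P"
    using normal.inv_op_closed2[OF Pnormal _ u] xc by simp
  have "(u \<otimes> x) [^] Suc j = w \<otimes> x [^] j \<otimes> (u \<otimes> x)" using w by simp
  also have "\<dots> = (w \<otimes> (x [^] j \<otimes> u \<otimes> inv (x [^] j))) \<otimes> x [^] Suc j"
    using xc uc wc by (simp add: m_assoc)
  finally show ?case using subgroup.m_closed[OF Psub w(1) v] by blast
qed

lemma dich: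
  assumes x: "x \<in> F"
  shows "(\<forall>u\<in>P. x \<otimes> u = u \<otimes> x) \<or>
         ((\<forall>u\<in>P. x \<otimes> u \<otimes> inv x = u \<longrightarrow> u = \<one>) \<and> (\<forall>u\<in>P. (u \<otimes> x) [^] ord x = \<one>))"
proof -
  have xc: "x \<in> carrier G" using x Fcarr by blast
  obtain a N where Nd: "N dvd p^k" and ordu: "\<And>u. u \<in> P \<Longrightarrow> ord u dvd N"
    and conj: "\<And>u. u \<in> P \<Longrightarrow> x \<otimes> u \<otimes> inv x = u [^] a" and cg: "int N dvd int a ^ ord x - 1"
    using expo[OF x] by blast
  have fix_iff: "u [^] a = u \<longleftrightarrow> int (ord u) dvd int a - 1" if u: "u \<in> P" for u
  proof -
    have uc: "u \<in> carrier G" using Pcarr[OF u] .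
    have "u [^] a = u \<longleftrightarrow> u [^] (int a) = u [^] (1::int)" using uc by (simp only: int_pow_int int_pow_1)
    also have "\<dots> \<longleftrightarrow> int (ord u) dvd (1 - int a)" using int_pow_eq[OF uc] by blast
    also have "\<dots> \<longleftrightarrow> int (ord u) dvd - (int a - 1)" by simp
    also have "\<dots> \<longleftrightarrow> int (ord u) dvd (int a - 1)" by (simp only: dvd_minus_iff)
    finally show ?thesis .
  qed
  have ordu': "int (ord u) dvd int N" if "u \<in> P" for u using ordu[OF that] by simp
  from nt_aux[OF pprime Nd cop_ordF[OF x] cg]
  show ?thesis
  proof
    assume A: "int N dvd int a - 1"
    have "x \<otimes> u = u \<otimes> x" if u: "u \<in> P" for u
    proof -
      have uc: "u \<in> carrier G" using Pcarr[OF u] .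
      have "u [^] a = u" using fix_iff[OF u] dvd_trans[OF ordu'[OF u] A] by blast
      then have e: "x \<otimes> u \<otimes> inv x = u" using conj[OF u] by simp
      have "x \<otimes> u = (x \<otimes> u \<otimes> inv x) \<otimes> x" using xc uc by (simp add: m_assoc)
      then show ?thesis using e by simp
    qed
    then show ?thesis by blast
  next
    assume B: "coprime (int N) (int a - 1) \<and> int N dvd (\<Sum>i\<in>{..<ord x}. int a ^ i)"
    have 1: "u = \<one>" if u: "u \<in> P" and e: "x \<otimes> u \<otimes> inv x = u" for u
    proof -
      have uc: "u \<in> carrier G" using Pcarr[OF u] .
      have "int (ord u) dvd int a - 1" using fix_iff[OF u] conj[OF u] e by simp
      then have "is_unit (int (ord u))" using B ordu'[OF u] coprime_common_divisor by blast
      then have "ord u = 1" by simp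
      then show ?thesis using ord_eq_1[OF uc] by simp
    qed
    have 2: "(u \<otimes> x) [^] ord x = \<one>" if u: "u \<in> P" for u
    proof -
      have uc: "u \<in> carrier G" using Pcarr[OF u] .
      have "int N dvd int (\<Sum>i\<in>{..<ord x}. a ^ i)" using B by simp
      then have "N dvd (\<Sum>i\<in>{..<ord x}. a ^ i)" by (simp only: of_nat_dvd_iff)
      then have "u [^] (\<Sum>i\<in>{..<ord x}. a ^ i) = \<one>" using ordu[OF u] pow_eq_id[OF uc] dvd_trans by blast
      then show ?thesis using pow_sum_lemma[OF xc conj u, of "ord x"] xc by simp
    qed
    show ?thesis using 1 2 by blast
  qed
qed


lemma sub_pow_closed: "subgroup H G \<Longrightarrow> y \<in> H \<Longrightarrow> y [^] (n::nat) \<in> H"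
  by (induct n) (simp_all add: subgroup.one_closed subgroup.m_closed)

lemma part1:
  assumes x: "x \<in> F"
  shows "(\<forall>u\<in>P. x \<otimes> u \<otimes> inv x = u) \<or> (\<forall>u\<in>P. x \<otimes> u \<otimes> inv x = u \<longrightarrow> u = \<one>)"
proof -
  have xc: "x \<in> carrier G" using x Fcarr by blast
  have "x \<otimes> u \<otimes> inv x = u" if "u \<in> P" "x \<otimes> u = u \<otimes> x" for u
    using that xc Pcarr[OF that(1)] by (simp add: m_assoc)
  then show ?thesis using dich[OF x] by blast
qed

lemma part2:
  assumes x: "x \<in> F" and u: "u \<in> P"
  shows "0 < ord x \<and> (u \<otimes> x) [^] ord x \<in> P \<and> (\<forall>k::nat. 0 < k \<and> (u \<otimes> x) [^] k \<in> P \<longrightarrow> ord x \<le> k)"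
proof -
  have xc: "x \<in> carrier G" using x Fcarr by blast
  have A: "0 < ord x" using ord_ge_1[OF finG xc] by simp
  obtain w where w: "w \<in> P" "(u \<otimes> x) [^] ord x = w \<otimes> x [^] ord x" using prodP[OF x u] by blast
  have B: "(u \<otimes> x) [^] ord x \<in> P" using w Pcarr[OF w(1)] xc by simp
  have C: "ord x \<le> k" if k: "0 < k" "(u \<otimes> x) [^] k \<in> P" for k :: nat
  proof -
    obtain w where w: "w \<in> P" "(u \<otimes> x) [^] k = w \<otimes> x [^] k" using prodP[OF x u] by blast
    have wc: "w \<in> carrier G" using Pcarr[OF w(1)] .
    have "x [^] k = inv w \<otimes> (w \<otimes> x [^] k)" using wc xc by simp
    also have "\<dots> \<in> P"
      using subgroup.m_closed[OF Psub subgroup.m_inv_closed[OF Psub w(1)] k(2)] w(2) by simp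
    finally have "x [^] k \<in> P" .
    moreover have "x [^] k \<in> F" using sub_pow_closed[OF Fsub x] .
    ultimately have "x [^] k = \<one>" using PF by blast
    then have "ord x dvd k" using pow_eq_id[OF xc] by blast
    then show ?thesis using k(1) by (simp add: dvd_imp_le)
  qed
  show ?thesis using A B C by blast
qed

lemma ordP_dvd:
  assumes u: "u \<in> P" shows "ord u dvd p ^ k"
proof -
  have "u [^] card P = \<one>" using subgroup_pow_card[OF Psub u] .
  then show ?thesis using pow_eq_id[OF Pcarr[OF u]] cardP by simp
qed

lemma split_one:
  assumes u: "u \<in> P" and x: "x \<in> F" and h: "u [^] (n::nat) \<otimes> x [^] n = \<one>"
  shows "u [^] n = \<one> \<and> x [^] n = \<one>"
proof -
  have xc: "x \<in> carrier G" using x Fcarr by blast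
  have uc: "u \<in> carrier G" using Pcarr[OF u] .
  have xn: "x [^] n \<in> carrier G" using xc by (rule nat_pow_closed)
  have un: "u [^] n \<in> carrier G" using uc by (rule nat_pow_closed)
  have i: "inv (x [^] n) = u [^] n" using h xn un by (rule inv_equality)
  have "inv (x [^] n) \<in> F" using subgroup.m_inv_closed[OF Fsub sub_pow_closed[OF Fsub x]] .
  then have "u [^] n \<in> F" by (simp only: i)
  moreover have "u [^] n \<in> P" using Pclosed[OF u] .
  ultimately have "u [^] n \<in> P \<inter> F" by (rule IntI[rotated])
  then have u1: "u [^] n = \<one>" using PF by (simp only: singleton_iff)
  have "x [^] n = \<one> \<otimes> x [^] n" using xn by (rule l_one[symmetric])
  also have "\<dots> = \<one>" using h by (simp only: u1)
  finally show ?thesis using u1 by (rule conjI[rotated])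
qed

lemma part3:
  assumes u: "u \<in> P" and x: "x \<in> F" and cx: "\<forall>v\<in>P. x \<otimes> v = v \<otimes> x"
  shows "ord (u \<otimes> x) = ord u * ord x"
proof -
  have xc: "x \<in> carrier G" using x Fcarr by blast
  have uc: "u \<in> carrier G" using Pcarr[OF u] .
  have cop: "coprime (ord u) (ord x)"
  proof -
    have "coprime (p ^ k) (ord x)" using cop_ordF[OF x] by simp
    then show ?thesis using coprime_divisors[OF ordP_dvd[OF u] dvd_refl] by blast
  qed
  have comm: "u \<otimes> x = x \<otimes> u" using bspec[OF cx u] by (rule sym)
  have key: "(u \<otimes> x) [^] n = \<one> \<longleftrightarrow> ord u * ord x dvd n" for n :: nat
  proof
    assume h: "(u \<otimes> x) [^] n = \<one>"
    have "u [^] n \<otimes> x [^] n = \<one>" by (rule trans[OF sym[OF pow_mult_distrib[OF comm uc xc]] h])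
    then have "u [^] n = \<one> \<and> x [^] n = \<one>" by (rule split_one[OF u x])
    then have "ord u dvd n" "ord x dvd n" using pow_eq_id[OF uc] pow_eq_id[OF xc] by blast+
    then show "ord u * ord x dvd n" using cop by (rule divides_mult)
  next
    assume h: "ord u * ord x dvd n"
    have "ord u dvd ord u * ord x" "ord x dvd ord u * ord x" by simp_all
    then have "ord u dvd n" "ord x dvd n" using h dvd_trans by blast+
    then have "u [^] n = \<one>" "x [^] n = \<one>" using pow_eq_id[OF uc] pow_eq_id[OF xc] by blast+
    then have "u [^] n \<otimes> x [^] n = \<one>" by (simp only: l_one one_closed)
    then show "(u \<otimes> x) [^] n = \<one>" by (rule trans[OF pow_mult_distrib[OF comm uc xc]])
  qed
  have uxc: "u \<otimes> x \<in> carrier G" using uc xc by (rule m_closed)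
  show ?thesis using ord_unique[OF uxc] key by blast
qed

lemma part4:
  assumes u: "u \<in> P" and x: "x \<in> F" and cx: "\<not> (\<forall>v\<in>P. x \<otimes> v = v \<otimes> x)"
  shows "ord (u \<otimes> x) = ord x"
proof -
  have xc: "x \<in> carrier G" using x Fcarr by blast
  have uc: "u \<in> carrier G" using Pcarr[OF u] .
  have uxc: "u \<otimes> x \<in> carrier G" using uc xc by (rule m_closed)
  have "(u \<otimes> x) [^] ord x = \<one>" using dich[OF x] cx u by blast
  then have d: "ord (u \<otimes> x) dvd ord x" using pow_eq_id[OF uxc] by blast
  have p2: "0 < ord x \<and> (\<forall>k::nat. 0 < k \<and> (u \<otimes> x) [^] k \<in> P \<longrightarrow> ord x \<le> k)" using part2[OF x u] by blast
  have g1: "0 < ord (u \<otimes> x)" using ord_ge_1[OF finG uxc] by simp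
  have "(u \<otimes> x) [^] ord (u \<otimes> x) = \<one>" using uxc by (rule pow_ord_eq_1)
  then have "(u \<otimes> x) [^] ord (u \<otimes> x) \<in> P" using subgroup.one_closed[OF Psub] by (simp only:)
  then have "ord x \<le> ord (u \<otimes> x)" using p2 g1 by blast
  moreover have "ord (u \<otimes> x) \<le> ord x" using d p2 by (simp add: dvd_imp_le)
  ultimately show ?thesis by simp
qed

lemma inj_prod: "inj_on (\<lambda>(u, x). u \<otimes> x) (P \<times> F)"
proof (rule inj_onI, clarify)
  fix u x u' x'
  assume u: "u \<in> P" and x: "x \<in> F" and u': "u' \<in> P" and x': "x' \<in> F" and eq: "u \<otimes> x = u' \<otimes> x'"
  have uc: "u \<in> carrier G" using Pcarr[OF u] .
  have uc': "u' \<in> carrier G" using Pcarr[OF u'] .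
  have xc: "x \<in> carrier G" using Fcarr[OF x] .
  have xc': "x' \<in> carrier G" using Fcarr[OF x'] .
  have "inv u' \<otimes> u = inv u' \<otimes> (u \<otimes> x) \<otimes> inv x" using uc uc' xc by (simp add: m_assoc)
  also have "\<dots> = inv u' \<otimes> (u' \<otimes> x') \<otimes> inv x" by (simp only: eq)
  also have "\<dots> = x' \<otimes> inv x" using uc' xc' xc by (simp add: m_assoc)
  finally have w: "inv u' \<otimes> u = x' \<otimes> inv x" .
  have "inv u' \<otimes> u \<in> P" using subgroup.m_closed[OF Psub subgroup.m_inv_closed[OF Psub u'] u] .
  moreover have "inv u' \<otimes> u \<in> F" using subgroup.m_closed[OF Fsub x' subgroup.m_inv_closed[OF Fsub x]] by (simp only: w)
  ultimately have "inv u' \<otimes> u \<in> P \<inter> F" by (rule IntI)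
  then have w1: "inv u' \<otimes> u = \<one>" using PF by (simp only: singleton_iff)
  have "u = u' \<otimes> (inv u' \<otimes> u)" using uc uc' by simp
  also have "\<dots> = u'" using uc' by (simp only: w1 r_one)
  finally have e1: "u = u'" .
  have "x' = x' \<otimes> inv x \<otimes> x" using xc xc' by (simp add: m_assoc)
  also have "\<dots> = x" using xc by (simp only: w[symmetric] w1 l_one)
  finally have e2: "x = x'" by (rule sym)
  show "u = u' \<and> x = x'" using e1 e2 by (rule conjI)
qed

lemma img_prod: "carrier G = (\<lambda>(u, x). u \<otimes> x) ` (P \<times> F)"
proof -
  have "(\<Union>h\<in>P. \<Union>k\<in>F. {h \<otimes> k}) = (\<lambda>(u, x). u \<otimes> x) ` (P \<times> F)"
    by (auto simp add: image_iff)
  then show ?thesis using PFG unfolding set_mult_def by simp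
qed

lemma part5:
  fixes Z defines "Z \<equiv> {x \<in> F. \<forall>u\<in>P. x \<otimes> u = u \<otimes> x}"
  shows "(\<Sum>g\<in>carrier G. ord g) = (\<Sum>u\<in>P. ord u) * (\<Sum>x\<in>Z. ord x) + card P * (\<Sum>x\<in>F - Z. ord x)"
proof -
  have ZF: "Z \<subseteq> F" unfolding Z_def by blast
  have "(\<Sum>g\<in>carrier G. ord g) = (\<Sum>g\<in>(\<lambda>(u, x). u \<otimes> x) ` (P \<times> F). ord g)"
    using img_prod by (simp only:)
  also have "\<dots> = (\<Sum>(u, x)\<in>P \<times> F. ord (u \<otimes> x))"
    using sum.reindex[OF inj_prod, of ord] by (simp add: case_prod_beta comp_def)
  also have "\<dots> = (\<Sum>u\<in>P. \<Sum>x\<in>F. ord (u \<otimes> x))" by (rule sum.cartesian_product[symmetric])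
  also have "\<dots> = (\<Sum>x\<in>F. \<Sum>u\<in>P. ord (u \<otimes> x))" by (rule sum.swap)
  also have "\<dots> = (\<Sum>x\<in>F - Z. \<Sum>u\<in>P. ord (u \<otimes> x)) + (\<Sum>x\<in>Z. \<Sum>u\<in>P. ord (u \<otimes> x))"
    using ZF finF by (rule sum.subset_diff)
  also have "(\<Sum>x\<in>F - Z. \<Sum>u\<in>P. ord (u \<otimes> x)) = (\<Sum>x\<in>F - Z. \<Sum>u\<in>P. ord x)"
  proof (rule sum.cong[OF refl], rule sum.cong[OF refl])
    fix x u assume x: "x \<in> F - Z" and u: "u \<in> P"
    have "\<not> (\<forall>v\<in>P. x \<otimes> v = v \<otimes> x)" using x unfolding Z_def by blast
    then show "ord (u \<otimes> x) = ord x" using part4[OF u] x by blast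
  qed
  also have "\<dots> = card P * (\<Sum>x\<in>F - Z. ord x)" by (simp add: sum_distrib_left)
  also have "(\<Sum>x\<in>Z. \<Sum>u\<in>P. ord (u \<otimes> x)) = (\<Sum>x\<in>Z. \<Sum>u\<in>P. ord u * ord x)"
  proof (rule sum.cong[OF refl], rule sum.cong[OF refl])
    fix x u assume x: "x \<in> Z" and u: "u \<in> P"
    have "x \<in> F" "\<forall>v\<in>P. x \<otimes> v = v \<otimes> x" using x unfolding Z_def by blast+
    then show "ord (u \<otimes> x) = ord u * ord x" using part3[OF u] by blast
  qed
  also have "\<dots> = (\<Sum>u\<in>P. ord u) * (\<Sum>x\<in>Z. ord x)"
    by (simp add: sum_distrib_left sum_distrib_right mult.commute)
  finally show ?thesis by simp
qed

lemma part5b: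
  fixes Z defines "Z \<equiv> {x \<in> F. \<forall>u\<in>P. x \<otimes> u = u \<otimes> x}"
  shows "card P * (\<Sum>x\<in>F - Z. ord x) < card P * (\<Sum>x\<in>F. ord x)"
proof -
  have ZF: "Z \<subseteq> F" unfolding Z_def by blast
  have oneZ: "\<one> \<in> Z" unfolding Z_def using subgroup.one_closed[OF Fsub] Pcarr by simp
  have finZ: "finite Z" using finF ZF by (rule finite_subset[rotated])
  have "ord \<one> \<le> (\<Sum>x\<in>Z. ord x)" by (rule member_le_sum[OF oneZ _ finZ]) simp
  then have pos: "0 < (\<Sum>x\<in>Z. ord x)" by simp
  have cP: "0 < card P" using finP subgroup.one_closed[OF Psub] card_gt_0_iff by blast
  have "(\<Sum>x\<in>F. ord x) = (\<Sum>x\<in>F - Z. ord x) + (\<Sum>x\<in>Z. ord x)"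
    using ZF finF by (rule sum.subset_diff)
  then show ?thesis using pos cP by simp
qed

end

theorem lemma2p2:
  fixes G (structure) and P F :: "'a set" and p :: nat
  assumes "group G" and "finite (carrier G)"
    and "Factorial_Ring.prime p"
    and "P \<lhd> G" and "cyclic_group (G\<lparr>carrier := P\<rparr>)" and "\<exists>k. card P = p ^ k"
    and "subgroup F G" and "card F > 1" and "coprime p (card F)"
    and "P \<inter> F = {\<one>}" and "P <#> F = carrier G"
  shows
    "(\<forall>x\<in>F. (\<forall>u\<in>P. x \<otimes> u \<otimes> inv x = u) \<or> (\<forall>u\<in>P. x \<otimes> u \<otimes> inv x = u \<longrightarrow> u = \<one>))
     \<and> (\<forall>x\<in>F. \<forall>u\<in>P. 0 < group.ord G x \<and> (u \<otimes> x) [^] group.ord G x \<in> P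
           \<and> (\<forall>k::nat. 0 < k \<and> (u \<otimes> x) [^] k \<in> P \<longrightarrow> group.ord G x \<le> k))
     \<and> (\<forall>u\<in>P. \<forall>x\<in>centralizer_in G F P. group.ord G (u \<otimes> x) = group.ord G u * group.ord G x)
     \<and> (\<forall>u\<in>P. \<forall>x\<in>F - centralizer_in G F P. group.ord G (u \<otimes> x) = group.ord G x)
     \<and> psi G (carrier G) = psi G P * psi G (centralizer_in G F P) + card P * psi G (F - centralizer_in G F P)
     \<and> psi G P * psi G (centralizer_in G F P) + card P * psi G (F - centralizer_in G F P)
         < psi G P * psi G (centralizer_in G F P) + card P * psi G F"
proof -
  from assms(6) obtain k where ck: "card P = p ^ k" by blast
  interpret S: sdp G P F p k
    unfolding sdp_def sdp_axioms_def using assms ck by blast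
  have Z: "centralizer_in G F P = {x \<in> F. \<forall>u\<in>P. x \<otimes> u = u \<otimes> x}" by (simp add: centralizer_in_def)
  have c1: "\<forall>x\<in>F. (\<forall>u\<in>P. x \<otimes> u \<otimes> inv x = u) \<or> (\<forall>u\<in>P. x \<otimes> u \<otimes> inv x = u \<longrightarrow> u = \<one>)"
    using S.part1 by blast
  have c2: "\<forall>x\<in>F. \<forall>u\<in>P. 0 < group.ord G x \<and> (u \<otimes> x) [^] group.ord G x \<in> P
           \<and> (\<forall>k::nat. 0 < k \<and> (u \<otimes> x) [^] k \<in> P \<longrightarrow> group.ord G x \<le> k)"
    using S.part2 by blast
  have c3: "\<forall>u\<in>P. \<forall>x\<in>centralizer_in G F P. group.ord G (u \<otimes> x) = group.ord G u * group.ord G x"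
    unfolding Z using S.part3 by blast
  have c4: "\<forall>u\<in>P. \<forall>x\<in>F - centralizer_in G F P. group.ord G (u \<otimes> x) = group.ord G x"
    unfolding Z using S.part4 by blast
  have c5: "psi G (carrier G) = psi G P * psi G (centralizer_in G F P) + card P * psi G (F - centralizer_in G F P)"
    unfolding Z psi_def using S.part5 by blast
  have c6: "psi G P * psi G (centralizer_in G F P) + card P * psi G (F - centralizer_in G F P)
         < psi G P * psi G (centralizer_in G F P) + card P * psi G F"
    unfolding Z psi_def using S.part5b by simp
  show ?thesis using c1 c2 c3 c4 c5 c6 by blast
qed

end
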